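(* Let $\mathcal{H}$ be a complex Hilbert space of finite dimension $d\geq 1$, let $N_d = 3^d\cdot \mathrm{lcm}\{3^1-2^1,3^2-2^2,\ldots,3^d-2^d\}$, and let $U,V$ be unitary operators on $\mathcal{H}$ with $V^{-1}U^2V=U^3$. Then for every $\lambda\in\mathbb{R}$ such that $e^{2\pi i\lambda}$ is an eigenvalue of $U$, one has $N_d\lambda\in\mathbb{Z}$. Consequently, if $e^{2\pi i\lambda}$ is an eigenvalue of $U$, then $-e^{2\pi i\lambda}$ is not an eigenvalue of $U$, and every eigenvector of $U^2$ is an eigenvector of $U$. *)

theory Defs
  imports "Jordan_Normal_Form.Schur_Decomposition" "Jordan_Normal_Form.Char_Poly"
begin

definition unitary_mat :: "nat \<Rightarrow> complex mat \<Rightarrow> bool" where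
  "unitary_mat d U \<longleftrightarrow> U \<in> carrier_mat d d \<and>
     U * mat_adjoint U = 1\<^sub>m d \<and> mat_adjoint U * U = 1\<^sub>m d"

definition N_const :: "nat \<Rightarrow> nat" where
  "N_const d = 3 ^ d * Lcm {3 ^ k - 2 ^ k | k. k \<in> {1..d}}"

end

theory Submission
  imports Defs "Jordan_Normal_Form.Spectral_Radius"
begin

lemma ev_sq:
  fixes A :: "complex mat"
  assumes A: "A \<in> carrier_mat n n" and ev: "eigenvalue (A * A) c"
  shows "\<exists>\<nu>. eigenvalue A \<nu> \<and> \<nu>^2 = c"
proof -
  from ev obtain v where v: "v \<in> carrier_vec n" "v \<noteq> 0\<^sub>v n" "(A * A) *\<^sub>v v = c \<cdot>\<^sub>v v"
    unfolding eigenvalue_def eigenvector_def using A by auto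
  define s where "s = csqrt c"
  have ss: "s * s = c" unfolding s_def by (metis power2_csqrt power2_eq_square)
  define w where "w = A *\<^sub>v v + s \<cdot>\<^sub>v v"
  have w: "w \<in> carrier_vec n" unfolding w_def using A v by auto
  show ?thesis
  proof (cases "w = 0\<^sub>v n")
    case True
    have "A *\<^sub>v v = (-s) \<cdot>\<^sub>v v"
    proof (rule eq_vecI)
      fix i assume i: "i < dim_vec ((-s) \<cdot>\<^sub>v v)"
      have "w $ i = 0" using True i v by auto
      then show "(A *\<^sub>v v) $ i = ((-s) \<cdot>\<^sub>v v) $ i" using i v A unfolding w_def
        by (auto simp: algebra_simps eq_neg_iff_add_eq_0)
    qed (use A v in auto)
    then have "eigenvalue A (-s)" unfolding eigenvalue_def eigenvector_def using A v by auto
    then show ?thesis using ss by (intro exI[of _ "-s"]) (auto simp: power2_eq_square)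
  next
    case False
    have "A *\<^sub>v w = A *\<^sub>v (A *\<^sub>v v) + A *\<^sub>v (s \<cdot>\<^sub>v v)" unfolding w_def
      using A v by (auto simp: mult_add_distrib_mat_vec)
    also have "A *\<^sub>v (A *\<^sub>v v) = c \<cdot>\<^sub>v v" using v A by (metis assoc_mult_mat_vec)
    also have "A *\<^sub>v (s \<cdot>\<^sub>v v) = s \<cdot>\<^sub>v (A *\<^sub>v v)" using v A by (auto simp: mult_mat_vec)
    finally have "A *\<^sub>v w = s \<cdot>\<^sub>v w"
      unfolding w_def using A v ss
      by (intro eq_vecI) (auto simp: algebra_simps)
    then have "eigenvalue A s" unfolding eigenvalue_def eigenvector_def using A w False by auto
    then show ?thesis using ss by (intro exI[of _ s]) (auto simp: power2_eq_square)
  qed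
qed


lemma ev_sq_vec:
  fixes A :: "complex mat"
  assumes A: "A \<in> carrier_mat n n" and ev: "eigenvector (A * A) v c"
  shows "(\<exists>\<kappa>. eigenvector A v \<kappa>) \<or> (eigenvalue A (csqrt c) \<and> eigenvalue A (- csqrt c))"
proof -
  from ev have v: "v \<in> carrier_vec n" "v \<noteq> 0\<^sub>v n" "(A * A) *\<^sub>v v = c \<cdot>\<^sub>v v"
    unfolding eigenvector_def using A by auto
  define s where "s = csqrt c"
  have ss: "s * s = c" unfolding s_def by (metis power2_csqrt power2_eq_square)
  have AAv: "A *\<^sub>v (A *\<^sub>v v) = c \<cdot>\<^sub>v v" using v A by (metis assoc_mult_mat_vec)
  define w where "w = A *\<^sub>v v + s \<cdot>\<^sub>v v"
  define w' where "w' = A *\<^sub>v v + (-s) \<cdot>\<^sub>v v"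
  have w: "w \<in> carrier_vec n" "w' \<in> carrier_vec n" unfolding w_def w'_def using A v by auto
  show ?thesis
  proof (cases "w = 0\<^sub>v n \<or> w' = 0\<^sub>v n")
    case True
    then obtain r where r: "A *\<^sub>v v + r \<cdot>\<^sub>v v = 0\<^sub>v n" unfolding w_def w'_def by blast
    have "A *\<^sub>v v = (-r) \<cdot>\<^sub>v v"
    proof (rule eq_vecI)
      fix i assume i: "i < dim_vec ((-r) \<cdot>\<^sub>v v)"
      have "(A *\<^sub>v v + r \<cdot>\<^sub>v v) $ i = 0" using r i v by auto
      then show "(A *\<^sub>v v) $ i = ((-r) \<cdot>\<^sub>v v) $ i" using i v A
        by (auto simp: algebra_simps eq_neg_iff_add_eq_0)
    qed (use A v in auto)
    then have "eigenvector A v (-r)" unfolding eigenvector_def using A v by auto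
    then show ?thesis by blast
  next
    case False
    have "A *\<^sub>v w = A *\<^sub>v (A *\<^sub>v v) + A *\<^sub>v (s \<cdot>\<^sub>v v)" unfolding w_def
      using A v by (auto simp: mult_add_distrib_mat_vec)
    also have "A *\<^sub>v (s \<cdot>\<^sub>v v) = s \<cdot>\<^sub>v (A *\<^sub>v v)" using v A by (auto simp: mult_mat_vec)
    finally have "A *\<^sub>v w = s \<cdot>\<^sub>v w"
      unfolding w_def using A v ss AAv
      by (intro eq_vecI) (auto simp: algebra_simps)
    then have e1: "eigenvalue A s" unfolding eigenvalue_def eigenvector_def using A w False by auto
    have "A *\<^sub>v w' = A *\<^sub>v (A *\<^sub>v v) + A *\<^sub>v ((-s) \<cdot>\<^sub>v v)" unfolding w'_def
      using A v by (auto simp: mult_add_distrib_mat_vec)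
    also have "A *\<^sub>v ((-s) \<cdot>\<^sub>v v) = (-s) \<cdot>\<^sub>v (A *\<^sub>v v)" using v A by (auto simp: mult_mat_vec)
    finally have "A *\<^sub>v w' = (-s) \<cdot>\<^sub>v w'"
      unfolding w'_def using A v ss AAv
      by (intro eq_vecI) (auto simp: algebra_simps)
    then have e2: "eigenvalue A (-s)" unfolding eigenvalue_def eigenvector_def using A w False by auto
    show ?thesis using e1 e2 s_def by blast
  qed
qed

lemma ev_cube:
  fixes U :: "complex mat"
  assumes U: "U \<in> carrier_mat n n" and ev: "eigenvalue U \<mu>"
  shows "eigenvalue (U * U * U) (\<mu>^3)"
proof -
  from ev obtain v where e: "eigenvector U v \<mu>" unfolding eigenvalue_def by auto
  have "U ^\<^sub>m 3 *\<^sub>v v = \<mu>^3 \<cdot>\<^sub>v v" by (rule eigenvector_pow[OF U e])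
  moreover have "U ^\<^sub>m 3 = U * U * U" using U by (simp add: numeral_3_eq_3)
  ultimately show ?thesis using e U unfolding eigenvalue_def eigenvector_def by auto
qed

lemma ev_sim:
  fixes U V Vinv :: "complex mat"
  assumes U: "U \<in> carrier_mat d d" and V: "V \<in> carrier_mat d d" and Vi: "Vinv \<in> carrier_mat d d"
    and i1: "inverts_mat Vinv V" and i2: "inverts_mat V Vinv"
    and eq: "Vinv * (U * U) * V = U * U * U"
    and ev: "eigenvalue (U * U * U) k"
  shows "eigenvalue (U * U) k"
proof -
  from ev obtain v where v: "v \<in> carrier_vec d" "v \<noteq> 0\<^sub>v d" "(U*U*U) *\<^sub>v v = k \<cdot>\<^sub>v v"
    unfolding eigenvalue_def eigenvector_def using U by auto
  have VVi: "V * Vinv = 1\<^sub>m d" using i2 V unfolding inverts_mat_def by auto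
  have ViV: "Vinv * V = 1\<^sub>m d" using i1 Vi unfolding inverts_mat_def by auto
  define x where "x = V *\<^sub>v v"
  have x: "x \<in> carrier_vec d" unfolding x_def using V v by auto
  have "Vinv *\<^sub>v x = v" unfolding x_def using V Vi v ViV
    by (metis assoc_mult_mat_vec one_mult_mat_vec)
  then have xn: "x \<noteq> 0\<^sub>v d" using v Vi by auto
  have "(U * U) *\<^sub>v x = (V * Vinv * (U * U)) *\<^sub>v x" using VVi U by simp
  also have "\<dots> = V *\<^sub>v ((Vinv * (U * U) * V) *\<^sub>v v)" unfolding x_def 
  proof -
    have c: "U * U \<in> carrier_mat d d" "Vinv * (U * U) \<in> carrier_mat d d" "V * Vinv \<in> carrier_mat d d"
        "V *\<^sub>v v \<in> carrier_vec d" using U V Vi v by auto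
    have c2: "V * Vinv * (U * U) \<in> carrier_mat d d" "Vinv * (U * U) * V \<in> carrier_mat d d" using U V Vi by auto
    have "V * Vinv * (U * U) *\<^sub>v (V *\<^sub>v v) = (V * Vinv * (U * U) * V) *\<^sub>v v"
      using assoc_mult_mat_vec[OF c2(1) V v(1)] by simp
    also have "\<dots> = (V * (Vinv * (U * U)) * V) *\<^sub>v v" using assoc_mult_mat[OF V Vi c(1)] by (simp only:)
    also have "\<dots> = (V * (Vinv * (U * U) * V)) *\<^sub>v v" using assoc_mult_mat[OF V c(2) V] by (simp only:)
    also have "(V * (Vinv * (U * U) * V)) *\<^sub>v v = V *\<^sub>v (Vinv * (U * U) * V *\<^sub>v v)"
      using assoc_mult_mat_vec[OF V c2(2) v(1)] .
    finally show "V * Vinv * (U * U) *\<^sub>v (V *\<^sub>v v) = V *\<^sub>v (Vinv * (U * U) * V *\<^sub>v v)" .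
  qed
  also have "\<dots> = V *\<^sub>v (k \<cdot>\<^sub>v v)" using eq v by simp
  also have "\<dots> = k \<cdot>\<^sub>v x" unfolding x_def using V v by (auto simp: mult_mat_vec)
  finally show ?thesis unfolding eigenvalue_def eigenvector_def using x xn U by auto
qed

lemma ev_nonzero:
  fixes U :: "complex mat"
  assumes u: "unitary_mat d U" and ev: "eigenvalue U \<mu>"
  shows "\<mu> \<noteq> 0"
proof
  assume z: "\<mu> = 0"
  have U: "U \<in> carrier_mat d d" and a: "mat_adjoint U * U = 1\<^sub>m d" using u unfolding unitary_mat_def by auto
  have Ua: "mat_adjoint U \<in> carrier_mat d d" using U unfolding mat_adjoint_def by auto
  from ev obtain v where v: "v \<in> carrier_vec d" "v \<noteq> 0\<^sub>v d" "U *\<^sub>v v = 0 \<cdot>\<^sub>v v"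
    unfolding eigenvalue_def eigenvector_def z using U by auto
  have "v = (mat_adjoint U * U) *\<^sub>v v" using a v by simp
  also have "\<dots> = mat_adjoint U *\<^sub>v (U *\<^sub>v v)" using Ua U v by (simp add: assoc_mult_mat_vec)
  also have "U *\<^sub>v v = 0 \<cdot>\<^sub>v v" by (rule v(3))
  also have "0 \<cdot>\<^sub>v v = 0\<^sub>v d" using v by (intro eq_vecI) auto
  also have "mat_adjoint U *\<^sub>v 0\<^sub>v d = 0\<^sub>v d" using Ua by (intro eq_vecI) auto
  finally show False using v by simp
qed


lemma odd_N: "odd (N_const d)"
proof -
  define S :: "nat set" where "S = {3 ^ k - 2 ^ k | k::nat. k \<in> {1..d}}"
  have fin: "finite S" unfolding S_def by auto
  have oddS: "odd x" if "x \<in> S" for x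
  proof -
    from that obtain k :: nat where k: "k \<ge> 1" "x = 3^k - 2^k" unfolding S_def by auto
    have le: "(2::nat)^k \<le> 3^k" by (simp add: power_mono)
    have "odd ((3::nat)^k)" by simp
    moreover have "even ((2::nat)^k)" using k by simp
    ultimately show ?thesis using k le by (simp add: even_diff_nat leD)
  qed
  have "Lcm S dvd prod id S" by (rule Lcm_least) (use fin in \<open>auto intro: dvd_prodI[where f=id, simplified]\<close>)
  moreover have "odd (prod id S)" using fin oddS by (simp add: even_prod_iff)
  ultimately have "odd (Lcm S)" using dvd_trans by blast
  then show ?thesis unfolding N_const_def S_def by simp
qed

lemma M_dvd_N:
  assumes "a \<le> d" "1 \<le> p" "p \<le> d"
  shows "3^a * (3^p - 2^p) dvd N_const d"
proof -
  have "(3::nat)^a dvd 3^d" using assms by (simp add: le_imp_power_dvd)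
  moreover have "(3::nat)^p - 2^p dvd Lcm {3 ^ k - 2 ^ k | k. k \<in> {1..d}}"
    by (rule dvd_Lcm) (use assms in auto)
  ultimately show ?thesis unfolding N_const_def by (rule mult_dvd_mono)
qed

lemma main_pow:
  fixes d :: nat and U V Vinv :: "complex mat"
  assumes u: "unitary_mat d U" and vv: "unitary_mat d V"
    and Vi: "Vinv \<in> carrier_mat d d" and i1: "inverts_mat Vinv V" and i2: "inverts_mat V Vinv"
    and eq: "Vinv * (U * U) * V = U * U * U"
    and ev0: "eigenvalue U \<mu>0"
  shows "\<mu>0 ^ N_const d = 1"
proof -
  have U: "U \<in> carrier_mat d d" using u unfolding unitary_mat_def by auto
  have V: "V \<in> carrier_mat d d" using vv unfolding unitary_mat_def by auto
  have step: "\<exists>\<nu>. eigenvalue U \<nu> \<and> \<nu>^2 = \<mu>^3" if "eigenvalue U \<mu>" for \<mu>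
    using ev_sq[OF U ev_sim[OF U V Vi i1 i2 eq ev_cube[OF U that]]] .
  define f where "f = (\<lambda>\<mu>. SOME \<nu>. eigenvalue U \<nu> \<and> \<nu>^2 = \<mu>^3)"
  have fprop: "eigenvalue U (f \<mu>) \<and> (f \<mu>)^2 = \<mu>^3" if "eigenvalue U \<mu>" for \<mu>
    unfolding f_def using someI_ex[OF step[OF that]] .
  define g where "g = (\<lambda>j. (f ^^ j) \<mu>0)"
  have gS: "g (Suc j) = f (g j)" for j unfolding g_def by simp
  have gE: "eigenvalue U (g j)" for j
    by (induction j) (auto simp: gS g_def ev0 fprop)
  have grec: "g (Suc j) ^ 2 = g j ^ 3" for j using fprop[OF gE[of j]] gS by simp
  have gpow: "g a ^ (3^p) = g (a+p) ^ (2^p)" for a p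
  proof (induction p)
    case 0 then show ?case by simp
  next
    case (Suc p)
    have "g a ^ (3^Suc p) = (g a ^ (3^p)) ^ 3" by (simp add: power_mult[symmetric] mult.commute)
    also have "\<dots> = (g (a+p) ^ 3) ^ (2^p)" using Suc by (simp add: power_mult[symmetric] mult.commute)
    also have "\<dots> = (g (Suc (a+p)) ^ 2) ^ (2^p)" using grec by simp
    also have "\<dots> = g (a + Suc p) ^ (2 ^ Suc p)" by (simp add: power_mult[symmetric] mult.commute)
    finally show ?case .
  qed
  have fin: "finite (spectrum U)" "card (spectrum U) \<le> d" using card_finite_spectrum[OF U] by auto
  have sub: "g ` {0..d} \<subseteq> spectrum U" using gE unfolding spectrum_def by auto
  have "\<not> inj_on g {0..d}"
  proof
    assume "inj_on g {0..d}"
    then have "card (g ` {0..d}) = Suc d" by (simp add: card_image)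
    moreover have "card (g ` {0..d}) \<le> d" using card_mono[OF fin(1) sub] fin(2) by simp
    ultimately show False by simp
  qed
  then obtain i j where ij: "i \<in> {0..d}" "j \<in> {0..d}" "i \<noteq> j" "g i = g j"
    unfolding inj_on_def by blast
  obtain a p where ap: "a \<le> d" "1 \<le> p" "p \<le> d" "g a = g (a+p)"
  proof (cases "i < j")
    case True then show ?thesis using that[of i "j - i"] ij by auto
  next
    case False then show ?thesis using that[of j "i - j"] ij by auto
  qed
  define q :: nat where "q = 3^p - 2^p"
  have le: "(2::nat)^p \<le> 3^p" by (simp add: power_mono)
  have nz: "g a \<noteq> 0" using ev_nonzero[OF u gE] .
  have "g a ^ (2^p) * g a ^ q = g a ^ (3^p)" unfolding q_def using le by (simp add: power_add[symmetric])
  also have "\<dots> = g a ^ (2^p)" using gpow[of a p] ap by simp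
  finally have q1: "g a ^ q = 1" using nz by simp
  have h2: "\<mu>0 ^ (3^a) = g a ^ (2^a)" using gpow[of 0 a] by (simp add: g_def)
  have "\<mu>0 ^ (3^a * q) = (\<mu>0 ^ (3^a)) ^ q" by (rule power_mult)
  also have "\<dots> = (g a ^ (2^a)) ^ q" using h2 by simp
  also have "\<dots> = g a ^ (q * 2^a)" by (simp add: power_mult[symmetric] mult.commute)
  also have "\<dots> = (g a ^ q) ^ (2^a)" by (rule power_mult)
  finally have M1: "\<mu>0 ^ (3^a * q) = 1" using q1 by simp
  obtain k where "N_const d = 3^a * q * k" using M_dvd_N[OF ap(1-3)] unfolding q_def by (auto elim: dvdE)
  then show ?thesis using M1 by (simp add: power_mult)
qed


lemma no_pm:
  fixes N :: nat and s :: complex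
  assumes "odd N" "s ^ N = 1" "(-s) ^ N = 1"
  shows False
proof -
  have "(-s) ^ N = - (s ^ N)" using assms(1) by (simp add: power_minus_odd)
  then show False using assms by simp
qed

lemma exp_int:
  fixes N :: nat and t :: real
  assumes "exp (2 * pi * \<i> * complex_of_real t) ^ N = 1"
  shows "\<exists>k::int. real N * t = of_int k"
proof -
  have e1: "exp (of_nat N * (2 * pi * \<i> * complex_of_real t)) = 1"
    using assms by (simp add: exp_of_nat_mult)
  have e2: "of_nat N * (2 * pi * \<i> * complex_of_real t) = \<i> * complex_of_real (2 * pi * (real N * t))"
    by simp
  have "Re (exp (\<i> * complex_of_real (2 * pi * (real N * t)))) = 1" using e1[unfolded e2] by simp
  then have "cos (2 * pi * (real N * t)) = 1" by (simp add: Re_exp)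
  then obtain n :: int where "2 * pi * (real N * t) = real_of_int n * 2 * pi" using cos_one_2pi_int by blast
  then have "real N * t = n" by simp
  then show ?thesis by blast
qed

theorem mainTheorem5:
  fixes d :: nat and U V Vinv :: "complex mat"
  assumes "d \<ge> 1"
    and "unitary_mat d U" and "unitary_mat d V"
    and "Vinv \<in> carrier_mat d d" and "inverts_mat Vinv V" and "inverts_mat V Vinv"
    and "Vinv * (U * U) * V = U * U * U"
  shows "(\<forall>t::real. eigenvalue U (exp (2 * pi * \<i> * complex_of_real t))
            \<longrightarrow> (\<exists>k::int. real (N_const d) * t = of_int k))
       \<and> (\<forall>t::real. eigenvalue U (exp (2 * pi * \<i> * complex_of_real t))
            \<longrightarrow> \<not> eigenvalue U (- exp (2 * pi * \<i> * complex_of_real t)))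
       \<and> (\<forall>v \<mu>. eigenvector (U * U) v \<mu> \<longrightarrow> (\<exists>\<kappa>. eigenvector U v \<kappa>))"
proof -
  note mp = main_pow[OF assms(2-7)]
  have U: "U \<in> carrier_mat d d" using assms(2) unfolding unitary_mat_def by auto
  have np: False if "eigenvalue U s" "eigenvalue U (-s)" for s
    using no_pm[OF odd_N mp[OF that(1)] mp[OF that(2)]] .
  show ?thesis
  proof (intro conjI allI impI)
    fix t :: real assume "eigenvalue U (exp (2 * pi * \<i> * complex_of_real t))"
    then show "\<exists>k::int. real (N_const d) * t = of_int k" using exp_int mp by blast
  next
    fix t :: real assume "eigenvalue U (exp (2 * pi * \<i> * complex_of_real t))"
    then show "\<not> eigenvalue U (- exp (2 * pi * \<i> * complex_of_real t))" using np by blast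
  next
    fix v \<mu> assume "eigenvector (U * U) v \<mu>"
    from ev_sq_vec[OF U this] np show "\<exists>\<kappa>. eigenvector U v \<kappa>" by blast
  qed
qed

end
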